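(* Let $\odot$ be a pseudo-multiplication on $[0,\infty]$ and let $\phi$ be the supremum of the set of $\odot$-finite elements. Then there do not exist $t,t'\in[0,\infty]$ with $t<\phi<t'$ and $t\odot t'=\phi$.
   Context: A pseudo-multiplication is a binary operation $\odot:[0,\infty]\times[0,\infty]\to[0,\infty]$ such that: $\odot$ is associative; $\odot$ is continuous on $(0,\infty)\times[0,\infty]$; for every $t$, the map $s\mapsto s\odot t$ is continuous on $(0,\infty]$; $\odot$ is nondecreasing in each argument; there is a left identity element $1_{\odot}$, i.e. $1_{\odot}\odot t=t$ for all $t$; there are no zero divisors, i.e. $s\odot t=0$ implies $s=0$ or $t=0$; and $0$ is an annihilator, i.e. $0\odot t=t\odot 0=0$ for all $t$. For $t\in[0,\infty]$ put $O(t)=\inf_{s>0} s\odot t$. An element $t$ is called $\odot$-finite if $O(t)=0$. *)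

theory Defs
  imports "HOL-Analysis.Analysis" "HOL-Library.Extended_Nonnegative_Real"
begin

definition pseudo_mult :: "(ennreal \<Rightarrow> ennreal \<Rightarrow> ennreal) \<Rightarrow> bool" where
  "pseudo_mult f \<longleftrightarrow>
     (\<forall>a b c. f (f a b) c = f a (f b c)) \<and>
     continuous_on ({0<..<\<infinity>} \<times> UNIV) (\<lambda>(s, t). f s t) \<and>
     (\<forall>t. continuous_on {0<..} (\<lambda>s. f s t)) \<and>
     (\<forall>s s' t. s \<le> s' \<longrightarrow> f s t \<le> f s' t) \<and>
     (\<forall>s t t'. t \<le> t' \<longrightarrow> f s t \<le> f s t') \<and>
     (\<exists>e. \<forall>t. f e t = t) \<and>
     (\<forall>s t. f s t = 0 \<longrightarrow> s = 0 \<or> t = 0) \<and>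
     (\<forall>t. f 0 t = 0 \<and> f t 0 = 0)"

definition pm_O :: "(ennreal \<Rightarrow> ennreal \<Rightarrow> ennreal) \<Rightarrow> ennreal \<Rightarrow> ennreal" where
  "pm_O f t = (INF s\<in>{0<..}. f s t)"

definition pm_finite :: "(ennreal \<Rightarrow> ennreal \<Rightarrow> ennreal) \<Rightarrow> ennreal \<Rightarrow> bool" where
  "pm_finite f t \<longleftrightarrow> pm_O f t = 0"

end

theory Submission
  imports Defs
begin

theorem corollary2p9:
  fixes f :: "ennreal \<Rightarrow> ennreal \<Rightarrow> ennreal"
  assumes "pseudo_mult f"
  shows "\<not> (\<exists>t t'. t < Sup {x. pm_finite f x} \<and> Sup {x. pm_finite f x} < t'
                   \<and> f t t' = Sup {x. pm_finite f x})"
proof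
  assume "\<exists>t t'. t < Sup {x. pm_finite f x} \<and> Sup {x. pm_finite f x} < t'
                   \<and> f t t' = Sup {x. pm_finite f x}"
  then obtain t t' where tl: "t < Sup {x. pm_finite f x}" and tr: "Sup {x. pm_finite f x} < t'"
    and eq: "f t t' = Sup {x. pm_finite f x}" by blast
  define \<phi> where "\<phi> = Sup {x. pm_finite f x}"
  note P = assms[unfolded pseudo_mult_def]
  have assoc: "\<And>a b c. f (f a b) c = f a (f b c)" using P[THEN conjunct1] by blast
  have cont: "continuous_on ({0<..<\<infinity>} \<times> UNIV) (\<lambda>(s, t). f s t)" using P[THEN conjunct2, THEN conjunct1] .
  have mono1: "\<And>s s' t. s \<le> s' \<Longrightarrow> f s t \<le> f s' t" using P[THEN conjunct2, THEN conjunct2, THEN conjunct2, THEN conjunct1] by blast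
  have mono2: "\<And>s t t'. t \<le> t' \<Longrightarrow> f s t \<le> f s t'" using P[THEN conjunct2, THEN conjunct2, THEN conjunct2, THEN conjunct2, THEN conjunct1] by blast
  have nzd: "\<And>s t. f s t = 0 \<Longrightarrow> s = 0 \<or> t = 0" using P[THEN conjunct2, THEN conjunct2, THEN conjunct2, THEN conjunct2, THEN conjunct2, THEN conjunct2, THEN conjunct1] by blast
  have ann: "\<And>t. f 0 t = 0 \<and> f t 0 = 0" using P[THEN conjunct2, THEN conjunct2, THEN conjunct2, THEN conjunct2, THEN conjunct2, THEN conjunct2, THEN conjunct2] by blast
  have Ogen: "f (pm_O f a) b \<le> pm_O f (f a b)" for a b
    unfolding pm_O_def
  proof (rule INF_greatest)
    fix s :: ennreal assume "s \<in> {0<..}"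
    have "pm_O f a \<le> f s a" unfolding pm_O_def using \<open>s \<in> {0<..}\<close> by (rule INF_lower)
    then have "f (pm_O f a) b \<le> f (f s a) b" by (rule mono1)
    then show "f (INF s\<in>{0<..}. f s a) b \<le> f s (f a b)" by (simp add: assoc pm_O_def)
  qed
  have Ogen2: "pm_O f b \<le> pm_O f (f a b)" if "a > 0" for a b
    unfolding pm_O_def
  proof (rule INF_greatest)
    fix s :: ennreal assume s: "s \<in> {0<..}"
    have "f s a \<noteq> 0" using nzd s that by force
    then have "f s a \<in> {0<..}" by (simp add: zero_less_iff_neq_zero)
    then have "(INF u\<in>{0<..}. f u b) \<le> f (f s a) b" by (rule INF_lower)
    then show "(INF u\<in>{0<..}. f u b) \<le> f s (f a b)" by (simp add: assoc)
  qed
  have tpos: "t > 0"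
  proof (rule ccontr)
    assume "\<not> t > 0"
    then have "t = 0" by (simp add: not_gr_zero)
    then show False using eq tl ann by simp
  qed
  have t'nf: "pm_O f t' > 0"
  proof (rule ccontr)
    assume "\<not> pm_O f t' > 0"
    then have "pm_finite f t'" by (simp add: pm_finite_def not_gr_zero)
    then have "t' \<le> \<phi>" unfolding \<phi>_def by (simp add: Sup_upper)
    then show False using tr \<phi>_def by simp
  qed
  have Ophi: "pm_O f \<phi> > 0"
    using Ogen2[OF tpos, of t'] t'nf eq \<phi>_def by simp
  have phipos: "\<phi> > 0" using tl \<phi>_def le_less_trans zero_le by blast
  have phifin: "\<phi> < \<infinity>" using tr \<phi>_def by (metis less_le_trans top_greatest infinity_ennreal_def)
  have key: "pm_O f (f \<phi> x) > 0" if "x > 0" for x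
  proof -
    have "f (pm_O f \<phi>) x \<noteq> 0" using nzd Ophi that by force
    then show ?thesis using Ogen[of \<phi> x] by (metis not_gr_zero order.strict_trans2 zero_less_iff_neq_zero)
  qed
  have tend: "((\<lambda>x. (\<lambda>(s, t). f s t) (\<phi>, x)) \<longlongrightarrow> (\<lambda>(s, t). f s t) (\<phi>, 0)) (at_right 0)"
    apply (rule continuous_on_tendsto_compose[OF cont])
    using phipos phifin by (auto simp: infinity_ennreal_def intro!: tendsto_Pair tendsto_const tendsto_ident_at)
  then have "((\<lambda>x. f \<phi> x) \<longlongrightarrow> 0) (at_right 0)" using ann by simp
  then have "\<forall>\<^sub>F x in at_right 0. f \<phi> x < \<phi>" using phipos by (rule order_tendstoD)
  then obtain b where b: "b > 0" "\<And>y. y > 0 \<Longrightarrow> y < b \<Longrightarrow> f \<phi> y < \<phi>"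
    using eventually_at_right[of "0::ennreal" 1] unfolding eventually_at_right[OF zero_less_one] by blast
  obtain y :: ennreal where y: "0 < y" "y < b" using dense b(1) by blast
  have lt: "f \<phi> y < \<phi>" using b y by blast
  then obtain z where z: "pm_finite f z" "f \<phi> y < z" unfolding \<phi>_def by (auto simp: less_Sup_iff)
  have "pm_O f (f \<phi> y) \<le> pm_O f z"
    unfolding pm_O_def by (rule INF_mono) (use z(2) mono2 less_imp_le in blast)
  then have "pm_O f (f \<phi> y) = 0" using z(1) by (simp add: pm_finite_def)
  then show False using key[OF y(1)] by simp
qed

end
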